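(* Let $k$ be a field, $X,Y,Z$ indeterminates, $M=(Y,Z)k((X))[[Y,Z]]$, and $R=k[[X]]+M$ (a subring of $T=k((X))[[Y,Z]]=k((X))+M$). Then every nonzero finitely generated ideal of $R$ is $v$-basic, but $R$ is not a $v$-domain; indeed $((Y,Z)(Y,Z)^{-1})_v=M\ne R$.
   Context: For a domain $R$ with quotient field $K$: $I^{-1}=(R:I)=\{x\in K:xI\subseteq R\}$, $I_v=(I^{-1})^{-1}$. $R$ is a $v$-domain if every nonzero finitely generated ideal $I$ satisfies $(II^{-1})_v=R$. For a nonzero ideal $I$, an ideal $J\subseteq I$ is a $v$-reduction of $I$ if $(JI^n)_v=(I^{n+1})_v$ for some integer $n\ge0$; $I$ is $v$-basic if every $v$-reduction $J$ of $I$ satisfies $J_v=I_v$. *)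

theory Defs
  imports "HOL-Computational_Algebra.Computational_Algebra"
begin

text \<open>General notions for a subring R of a field 'a (the ambient field plays
the role of the quotient field K of R). Ideals and fractional ideals are subsets of 'a.\<close>

definition is_ideal :: "'a::field set \<Rightarrow> 'a set \<Rightarrow> bool" where
  "is_ideal R I \<longleftrightarrow> I \<subseteq> R \<and> 0 \<in> I \<and> (\<forall>a\<in>I. \<forall>b\<in>I. a + b \<in> I)
      \<and> (\<forall>r\<in>R. \<forall>a\<in>I. r * a \<in> I)"

definition ideal_gen :: "'a::field set \<Rightarrow> 'a set \<Rightarrow> 'a set" where
  "ideal_gen R S = {x. \<exists>c. (\<forall>s\<in>S. c s \<in> R) \<and> x = (\<Sum>s\<in>S. c s * s)}"

definition fin_gen_ideal :: "'a::field set \<Rightarrow> 'a set \<Rightarrow> bool" where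
  "fin_gen_ideal R I \<longleftrightarrow> (\<exists>S. finite S \<and> S \<subseteq> R \<and> I = ideal_gen R S)"

definition frac_inv :: "'a::field set \<Rightarrow> 'a set \<Rightarrow> 'a set" where
  "frac_inv R I = {x. \<forall>i\<in>I. x * i \<in> R}"

definition v_closure :: "'a::field set \<Rightarrow> 'a set \<Rightarrow> 'a set" where
  "v_closure R I = frac_inv R (frac_inv R I)"

definition fideal_prod :: "'a::field set \<Rightarrow> 'a set \<Rightarrow> 'a set" where
  "fideal_prod I J = {x. \<exists>(n::nat) f g. (\<forall>k<n. f k \<in> I \<and> g k \<in> J) \<and> x = (\<Sum>k<n. f k * g k)}"

primrec fideal_pow :: "'a::field set \<Rightarrow> 'a set \<Rightarrow> nat \<Rightarrow> 'a set" where
  "fideal_pow R I 0 = R"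
| "fideal_pow R I (Suc n) = fideal_prod (fideal_pow R I n) I"

definition v_reduction :: "'a::field set \<Rightarrow> 'a set \<Rightarrow> 'a set \<Rightarrow> bool" where
  "v_reduction R J I \<longleftrightarrow> is_ideal R J \<and> J \<subseteq> I \<and>
     (\<exists>n. v_closure R (fideal_prod J (fideal_pow R I n)) = v_closure R (fideal_pow R I (Suc n)))"

definition v_basic :: "'a::field set \<Rightarrow> 'a set \<Rightarrow> bool" where
  "v_basic R I \<longleftrightarrow> (\<forall>J. v_reduction R J I \<longrightarrow> v_closure R J = v_closure R I)"

definition v_domain :: "'a::field set \<Rightarrow> bool" where
  "v_domain R \<longleftrightarrow> (\<forall>I. is_ideal R I \<and> fin_gen_ideal R I \<and> I \<noteq> {0} \<longrightarrow>
      v_closure R (fideal_prod I (frac_inv R I)) = R)"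

text \<open>The concrete rings. T = k((X))[[Y,Z]] is modelled as ('k fls fps) fps:
  power series in Z whose coefficients are power series in Y over k((X)).
  The constant term of f is f $ 0 $ 0.\<close>

type_synonym 'k Tring = "'k fls fps fps"

definition Yvar :: "'k::field Tring" where
  "Yvar = fps_const fps_X"
definition Zvar :: "'k::field Tring" where
  "Zvar = fps_X"

text \<open>M = (Y,Z) T = series with zero constant term.\<close>
definition Mset :: "'k::field Tring set" where
  "Mset = {f. f $ 0 $ 0 = 0}"

text \<open>R = k[[X]] + M: constant term lies in k[[X]].\<close>
definition Rset :: "'k::field Tring set" where
  "Rset = {f. f $ 0 $ 0 \<in> range fps_to_fls}"

text \<open>R and M viewed inside the quotient field K = Frac(T) = Frac(R).\<close>
definition Rfr :: "'k::field Tring fract set" where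
  "Rfr = to_fract ` Rset"
definition Mfr :: "'k::field Tring fract set" where
  "Mfr = to_fract ` Mset"

end

theory Submission
  imports Defs
begin

definition rmod :: "'a::field set \<Rightarrow> 'a set \<Rightarrow> bool" where
  "rmod R N \<longleftrightarrow> 0 \<in> N \<and> (\<forall>a\<in>N. \<forall>b\<in>N. a + b \<in> N) \<and> (\<forall>r\<in>R. \<forall>a\<in>N. r * a \<in> N)"

definition subr :: "'a::field set \<Rightarrow> bool" where
  "subr R \<longleftrightarrow> 0 \<in> R \<and> 1 \<in> R \<and> (\<forall>a\<in>R. \<forall>b\<in>R. a + b \<in> R \<and> a * b \<in> R \<and> - a \<in> R)"

lemma is_ideal_rmod: "is_ideal R I \<longleftrightarrow> I \<subseteq> R \<and> rmod R I"
  unfolding is_ideal_def rmod_def by blast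

lemma subr_rmod: "subr R \<Longrightarrow> rmod R R"
  unfolding subr_def rmod_def by blast

lemma rmod_sum: "rmod R N \<Longrightarrow> (\<And>i. i \<in> A \<Longrightarrow> f i \<in> N) \<Longrightarrow> sum f A \<in> N"
proof (induction A rule: infinite_finite_induct)
  case (infinite A) thus ?case by (simp add: rmod_def)
next
  case empty thus ?case by (simp add: rmod_def)
next
  case (insert x F) thus ?case by (simp add: rmod_def)
qed

lemma subr_sum: "subr R \<Longrightarrow> (\<And>i. i \<in> A \<Longrightarrow> f i \<in> R) \<Longrightarrow> sum f A \<in> R"
  using rmod_sum subr_rmod by blast

lemma ideal_gen_min:
  assumes "rmod R N" "S \<subseteq> N"
  shows "ideal_gen R S \<subseteq> N"
proof
  fix x assume "x \<in> ideal_gen R S"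
  then obtain c where c: "\<forall>s\<in>S. c s \<in> R" "x = (\<Sum>s\<in>S. c s * s)" unfolding ideal_gen_def by blast
  show "x \<in> N" unfolding c(2) using assms c(1) by (intro rmod_sum) (auto simp: rmod_def)
qed

lemma ideal_gen_rmod:
  assumes "subr R"
  shows "rmod R (ideal_gen R S)"
  unfolding rmod_def
proof (intro conjI ballI)
  show "0 \<in> ideal_gen R S" unfolding ideal_gen_def
    by (rule CollectI, rule exI[of _ "\<lambda>_. 0"]) (use assms in \<open>auto simp: subr_def\<close>)
next
  fix a b assume "a \<in> ideal_gen R S" "b \<in> ideal_gen R S"
  then obtain c d where c: "\<forall>s\<in>S. c s \<in> R" "a = (\<Sum>s\<in>S. c s * s)"
    and d: "\<forall>s\<in>S. d s \<in> R" "b = (\<Sum>s\<in>S. d s * s)" unfolding ideal_gen_def by blast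
  show "a + b \<in> ideal_gen R S" unfolding ideal_gen_def
    by (rule CollectI, rule exI[of _ "\<lambda>s. c s + d s"])
       (use assms c d in \<open>auto simp: subr_def distrib_right sum.distrib\<close>)
next
  fix r a assume "r \<in> R" "a \<in> ideal_gen R S"
  then obtain c where c: "\<forall>s\<in>S. c s \<in> R" "a = (\<Sum>s\<in>S. c s * s)" unfolding ideal_gen_def by blast
  show "r * a \<in> ideal_gen R S" unfolding ideal_gen_def
    by (rule CollectI, rule exI[of _ "\<lambda>s. r * c s"])
       (use assms c \<open>r \<in> R\<close> in \<open>auto simp: subr_def sum_distrib_left mult.assoc\<close>)
qed

lemma ideal_gen_incl:
  assumes "subr R" "finite S"
  shows "S \<subseteq> ideal_gen R S"
proof
  fix x assume x: "x \<in> S"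
  have "x = (\<Sum>s\<in>S. (if s = x then 1 else 0) * s)"
  proof -
    have "(\<Sum>s\<in>S. (if s = x then 1 else 0) * s) = (\<Sum>s\<in>S. if s = x then s else 0)"
      by (rule sum.cong) auto
    thus ?thesis using assms(2) x by (simp add: sum.delta)
  qed
  thus "x \<in> ideal_gen R S" unfolding ideal_gen_def
    by (intro CollectI exI[of _ "\<lambda>s. if s = x then 1 else 0"]) (use assms in \<open>auto simp: subr_def\<close>)
qed

lemma rmod_scale: "rmod R N \<Longrightarrow> rmod R ((*) c ` N)"
proof -
  assume N: "rmod R N"
  show ?thesis unfolding rmod_def
  proof (intro conjI ballI)
    show "0 \<in> (*) c ` N" using N by (auto simp: rmod_def intro!: image_eqI[of _ _ 0])
  next
    fix a b assume "a \<in> (*) c ` N" "b \<in> (*) c ` N"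
    then obtain a' b' where "a' \<in> N" "b' \<in> N" "a = c * a'" "b = c * b'" by blast
    thus "a + b \<in> (*) c ` N" using N by (auto simp: rmod_def distrib_left[symmetric])
  next
    fix r a assume "r \<in> R" "a \<in> (*) c ` N"
    then obtain a' where "a' \<in> N" "a = c * a'" by blast
    thus "r * a \<in> (*) c ` N" using N \<open>r \<in> R\<close>
      by (auto simp: rmod_def intro!: image_eqI[of _ _ "r * a'"])
  qed
qed

lemma ideal_gen_scale:
  assumes "subr R" "finite S" "e \<noteq> 0"
  shows "(*) e ` ideal_gen R S = ideal_gen R ((*) e ` S)"
proof
  show "ideal_gen R ((*) e ` S) \<subseteq> (*) e ` ideal_gen R S"
    using assms by (intro ideal_gen_min rmod_scale ideal_gen_rmod) (auto dest: ideal_gen_incl)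
next
  have "ideal_gen R S \<subseteq> (*) (inverse e) ` ideal_gen R ((*) e ` S)"
  proof (intro ideal_gen_min rmod_scale ideal_gen_rmod assms(1) subsetI)
    fix s assume "s \<in> S"
    hence "e * s \<in> ideal_gen R ((*) e ` S)" using ideal_gen_incl[OF assms(1), of "(*) e ` S"] assms(2) by auto
    thus "s \<in> (*) (inverse e) ` ideal_gen R ((*) e ` S)" using assms(3)
      by (intro image_eqI[of _ _ "e * s"]) (auto simp: field_simps)
  qed
  thus "(*) e ` ideal_gen R S \<subseteq> ideal_gen R ((*) e ` S)" using assms(3)
    by (auto simp: image_iff field_simps)
qed

lemma fp_mem: "f \<in> A \<Longrightarrow> g \<in> B \<Longrightarrow> f * g \<in> fideal_prod A B"
  unfolding fideal_prod_def
  by (intro CollectI exI[of _ "1::nat"] exI[of _ "\<lambda>_. f"] exI[of _ "\<lambda>_. g"]) auto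

lemma fp_sub:
  assumes "0 \<in> N" "\<And>a b. a \<in> N \<Longrightarrow> b \<in> N \<Longrightarrow> a + b \<in> N"
    "\<And>f g. f \<in> A \<Longrightarrow> g \<in> B \<Longrightarrow> f * g \<in> N"
  shows "fideal_prod A B \<subseteq> N"
proof
  fix x assume "x \<in> fideal_prod A B"
  hence "\<exists>(n::nat) f g. (\<forall>k<n. f k \<in> A \<and> g k \<in> B) \<and> x = (\<Sum>k<n. f k * g k)"
    unfolding fideal_prod_def by simp
  then obtain n :: nat and f g where fg: "\<forall>k<n. f k \<in> A \<and> g k \<in> B" "x = (\<Sum>k<n. f k * g k)"
    by blast
  have "\<forall>m\<le>n. (\<Sum>k<m. f k * g k) \<in> N"
  proof (intro allI impI)
    fix m assume "m \<le> n" thus "(\<Sum>k<m. f k * g k) \<in> N"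
      by (induction m) (use assms fg in auto)
  qed
  thus "x \<in> N" using fg by auto
qed

lemma frac_inv_anti: "A \<subseteq> B \<Longrightarrow> frac_inv R B \<subseteq> frac_inv R A"
  unfolding frac_inv_def by auto

lemma frac_inv_incl: "A \<subseteq> frac_inv R (frac_inv R A)"
  unfolding frac_inv_def by (auto simp: mult.commute)

lemma frac_inv_v: "frac_inv R (v_closure R A) = frac_inv R A"
  unfolding v_closure_def
  by (meson frac_inv_anti frac_inv_incl subset_antisym)

lemma frac_inv_scale:
  assumes "c \<noteq> 0"
  shows "frac_inv R ((*) c ` A) = (*) (inverse c) ` frac_inv R A"
proof
  show "frac_inv R ((*) c ` A) \<subseteq> (*) (inverse c) ` frac_inv R A"
  proof
    fix x assume x: "x \<in> frac_inv R ((*) c ` A)"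
    have "x * c \<in> frac_inv R A" using x unfolding frac_inv_def by (auto simp: mult.assoc)
    thus "x \<in> (*) (inverse c) ` frac_inv R A" using assms
      by (intro image_eqI[of _ _ "x * c"]) (auto simp: field_simps)
  qed
next
  show "(*) (inverse c) ` frac_inv R A \<subseteq> frac_inv R ((*) c ` A)"
    unfolding frac_inv_def using assms by (auto simp: field_simps)
qed

lemma v_scale:
  assumes "c \<noteq> 0"
  shows "v_closure R ((*) c ` A) = (*) c ` v_closure R A"
  unfolding v_closure_def using assms by (simp add: frac_inv_scale)

lemma frac_inv_R: "subr R \<Longrightarrow> frac_inv R R = R"
proof
  assume R: "subr R"
  show "frac_inv R R \<subseteq> R"
  proof
    fix x assume "x \<in> frac_inv R R"
    hence "x * 1 \<in> R" using R unfolding frac_inv_def subr_def by blast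
    thus "x \<in> R" by simp
  qed
  show "R \<subseteq> frac_inv R R" using R unfolding frac_inv_def subr_def by blast
qed

lemma v_R: "subr R \<Longrightarrow> v_closure R R = R"
  unfolding v_closure_def by (simp add: frac_inv_R)

lemma fp_scaleR:
  assumes "subr R" "rmod R A"
  shows "fideal_prod A ((*) c ` R) = (*) c ` A"
proof
  show "fideal_prod A ((*) c ` R) \<subseteq> (*) c ` A"
  proof (rule fp_sub)
    have m: "rmod R ((*) c ` A)" using assms(2) by (rule rmod_scale)
    show "0 \<in> (*) c ` A" using m by (simp add: rmod_def)
    show "a + b \<in> (*) c ` A" if "a \<in> (*) c ` A" "b \<in> (*) c ` A" for a b
      using m that unfolding rmod_def by blast
    show "f * g \<in> (*) c ` A" if fg: "f \<in> A" "g \<in> (*) c ` R" for f g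
    proof -
      obtain r where r: "r \<in> R" "g = c * r" using fg(2) by (elim imageE) auto
      have "r * f \<in> A" using assms(2) r fg by (simp add: rmod_def)
      thus ?thesis using r by (auto simp: ac_simps)
    qed
  qed
next
  show "(*) c ` A \<subseteq> fideal_prod A ((*) c ` R)"
  proof
    fix x assume "x \<in> (*) c ` A"
    then obtain a where a: "a \<in> A" "x = c * a" by blast
    have "c * 1 \<in> (*) c ` R" using assms(1) by (auto simp: subr_def)
    from fp_mem[OF a(1) this] show "x \<in> fideal_prod A ((*) c ` R)" using a by (simp add: ac_simps)
  qed
qed

lemma fpow_principal:
  assumes "subr R"
  shows "fideal_pow R ((*) c ` R) n = (*) (c ^ n) ` R"
proof (induction n)
  case 0 thus ?case by simp
next
  case (Suc n)
  have "fideal_pow R ((*) c ` R) (Suc n) = fideal_prod ((*) (c ^ n) ` R) ((*) c ` R)"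
    using Suc by simp
  also have "\<dots> = (*) c ` (*) (c ^ n) ` R"
    by (rule fp_scaleR[OF assms rmod_scale[OF subr_rmod[OF assms]]])
  also have "\<dots> = (*) (c ^ Suc n) ` R" by (simp add: image_image ac_simps)
  finally show ?case .
qed

lemma image_scale_cancel:
  assumes "(*) (c::'a::field) ` A = (*) c ` B" "c \<noteq> 0"
  shows "A = B"
proof -
  have "(*) (inverse c) ` (*) c ` A = (*) (inverse c) ` (*) c ` B" using assms(1) by simp
  moreover have "\<And>X. (*) (inverse c) ` (*) c ` X = X" using assms(2)
    by (simp add: image_image mult.assoc[symmetric])
  ultimately show ?thesis by metis
qed

theorem principal_vbasic:
  assumes R: "subr R" and I: "I = (*) c ` R" "c \<noteq> 0"
    and J: "v_reduction R J I"
  shows "v_closure R J = v_closure R I"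
proof -
  from J obtain n where J1: "is_ideal R J" and
    eq: "v_closure R (fideal_prod J (fideal_pow R I n)) = v_closure R (fideal_pow R I (Suc n))"
    unfolding v_reduction_def by blast
  have "fideal_prod J (fideal_pow R I n) = (*) (c ^ n) ` J"
    unfolding I(1) fpow_principal[OF R] by (rule fp_scaleR[OF R]) (use J1 in \<open>simp add: is_ideal_rmod\<close>)
  hence "(*) (c ^ n) ` v_closure R J = (*) (c ^ Suc n) ` R"
    using eq I unfolding fpow_principal[OF R] I(1) by (simp add: v_scale v_R[OF R])
  hence "(*) (c ^ n) ` v_closure R J = (*) (c ^ n) ` ((*) c ` R)"
    by (simp add: image_image ac_simps)
  hence "v_closure R J = (*) c ` R" by (rule image_scale_cancel) (use I(2) in simp)
  also have "\<dots> = v_closure R I" unfolding I(1) using I(2) by (simp add: v_scale v_R[OF R])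
  finally show ?thesis .
qed

lemma fpow_sub:
  assumes "subr R" "I \<subseteq> R"
  shows "fideal_pow R I n \<subseteq> R"
proof (induction n)
  case 0 thus ?case by simp
next
  case (Suc n)
  show ?case unfolding fideal_pow.simps
    by (rule fp_sub) (use assms Suc in \<open>auto simp: subr_def\<close>)
qed

lemma fpow_mem:
  assumes "subr R" "i \<in> I"
  shows "i ^ n \<in> fideal_pow R I n"
proof (induction n)
  case 0 thus ?case using assms by (simp add: subr_def)
next
  case (Suc n)
  show ?case using fp_mem[OF Suc assms(2)] by (simp add: mult.commute)
qed

theorem nonprincipal_vbasic:
  fixes R T :: "'a::field set"
  assumes R: "subr R" and RT: "R \<subseteq> T" and T: "subr T"
    and YZ: "\<And>t. t \<in> T \<Longrightarrow> Y * t \<in> R" "\<And>t. t \<in> T \<Longrightarrow> Z * t \<in> R"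
    and C3: "\<And>x. x * Y \<in> T \<Longrightarrow> x * Z \<in> T \<Longrightarrow> x \<in> T"
    and CIC: "\<And>d w. d \<in> T \<Longrightarrow> d \<noteq> 0 \<Longrightarrow> (\<forall>k. d * w ^ k \<in> T) \<Longrightarrow> w \<in> T"
    and I: "is_ideal R I" "I \<noteq> {0}" "frac_inv T I \<subseteq> frac_inv R I"
    and J: "v_reduction R J I"
  shows "v_closure R J = v_closure R I"
proof -
  from J obtain n where J1: "is_ideal R J" "J \<subseteq> I" and
    eq: "v_closure R (fideal_prod J (fideal_pow R I n)) = v_closure R (fideal_pow R I (Suc n))"
    unfolding v_reduction_def by blast
  define P where "P = fideal_pow R I n"
  have inv_eq: "frac_inv R (fideal_prod J P) = frac_inv R (fideal_prod P I)"
    using arg_cong[OF eq, of "frac_inv R"] unfolding frac_inv_v P_def by simp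
  have IR: "I \<subseteq> R" "J \<subseteq> R" using I(1) J1(1) by (auto simp: is_ideal_def)
  have PR: "P \<subseteq> R" unfolding P_def by (rule fpow_sub[OF R IR(1)])
  have Tc: "0 \<in> T" "1 \<in> T" "\<And>a b. a \<in> T \<Longrightarrow> b \<in> T \<Longrightarrow> a + b \<in> T"
     "\<And>a b. a \<in> T \<Longrightarrow> b \<in> T \<Longrightarrow> a * b \<in> T" using T by (auto simp: subr_def)
  have "frac_inv R J \<subseteq> frac_inv R I"
  proof
    fix y assume y: "y \<in> frac_inv R J"
    have "y \<in> frac_inv T I" unfolding frac_inv_def
    proof (intro CollectI ballI)
      fix i assume i: "i \<in> I"
      define w where "w = y * i"
      define Q where "Q = frac_inv T P"
      have key: "w * z \<in> Q" if z: "z \<in> Q" for z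
        unfolding Q_def frac_inv_def
      proof (intro CollectI ballI)
        fix a assume a: "a \<in> P"
        have sub: "fideal_prod J P \<subseteq> {p. y * z * p \<in> T}"
        proof (rule fp_sub)
          show "0 \<in> {p. y * z * p \<in> T}" using Tc by simp
          show "a + b \<in> {p. y * z * p \<in> T}" if "a \<in> {p. y * z * p \<in> T}" "b \<in> {p. y * z * p \<in> T}" for a b
            using that Tc(3) by (simp add: distrib_left)
          show "f * g \<in> {p. y * z * p \<in> T}" if "f \<in> J" "g \<in> P" for f g
          proof -
            have "y * f \<in> T" using y that RT unfolding frac_inv_def by blast
            moreover have "z * g \<in> T" using z that unfolding Q_def frac_inv_def by blast
            ultimately have "(y * f) * (z * g) \<in> T" by (rule Tc(4))
            thus ?thesis by (simp add: ac_simps)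
          qed
        qed
        have m: "m * (y * z) \<in> frac_inv R (fideal_prod P I)"
          if m: "\<And>t. t \<in> T \<Longrightarrow> m * t \<in> R" for m
        proof -
          have "m * (y * z) \<in> frac_inv R (fideal_prod J P)" unfolding frac_inv_def
          proof (intro CollectI ballI)
            fix p assume "p \<in> fideal_prod J P"
            hence "y * z * p \<in> T" using sub by blast
            from m[OF this] show "m * (y * z) * p \<in> R" by (simp add: ac_simps)
          qed
          thus ?thesis using inv_eq by simp
        qed
        have ai: "a * i \<in> fideal_prod P I" using fp_mem[OF a i] .
        have "Y * (y * z) * (a * i) \<in> T" "Z * (y * z) * (a * i) \<in> T"
          using m[OF YZ(1)] m[OF YZ(2)] ai RT unfolding frac_inv_def by blast+
        hence "(w * z * a) * Y \<in> T" "(w * z * a) * Z \<in> T" unfolding w_def by (simp_all add: ac_simps)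
        from C3[OF this] show "w * z * a \<in> T" .
      qed
      have Q1: "1 \<in> Q" unfolding Q_def frac_inv_def using PR RT by auto
      have wk: "w ^ k \<in> Q" for k
      proof (induction k)
        case 0 thus ?case using Q1 by simp
      next
        case (Suc k) thus ?case using key[OF Suc] by simp
      qed
      obtain i0 where i0: "i0 \<in> I" "i0 \<noteq> 0" using I(2) I(1) unfolding is_ideal_def by blast
      have d: "i0 ^ n \<in> P" unfolding P_def by (rule fpow_mem[OF R i0(1)])
      have "\<forall>k. i0 ^ n * w ^ k \<in> T" using wk d unfolding Q_def frac_inv_def by (auto simp: ac_simps)
      moreover have "i0 ^ n \<in> T" using d PR RT by blast
      moreover have "i0 ^ n \<noteq> 0" using i0 by simp
      ultimately have "w \<in> T" using CIC by blast
      thus "y * i \<in> T" unfolding w_def .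
    qed
    thus "y \<in> frac_inv R I" using I(3) by blast
  qed
  moreover have "frac_inv R I \<subseteq> frac_inv R J" by (rule frac_inv_anti[OF J1(2)])
  ultimately have "frac_inv R J = frac_inv R I" by blast
  thus ?thesis unfolding v_closure_def by simp
qed

abbreviation c0 :: "'k::field Tring \<Rightarrow> 'k fls" where "c0 f \<equiv> f $ 0 $ 0"

definition Tfr :: "'k::field Tring fract set" where "Tfr = range to_fract"

lemma c0_mult [simp]: "c0 (f * g) = c0 f * c0 g" by simp
lemma c0_add [simp]: "c0 (f + g) = c0 f + c0 g" by simp
lemma c0_uminus [simp]: "c0 (- f) = - c0 f" by simp
lemma c0_one [simp]: "c0 (1 :: 'k::field Tring) = 1" by simp
lemma c0_zero [simp]: "c0 (0 :: 'k::field Tring) = 0" by simp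

lemma Dom_iff: "(c :: 'k::field fls) \<in> range fps_to_fls \<longleftrightarrow> 0 \<le> fls_subdegree c"
proof
  assume "c \<in> range fps_to_fls" thus "0 \<le> fls_subdegree c" using fls_subdegree_fls_to_fps_gt0 by auto
next
  assume "0 \<le> fls_subdegree c"
  hence "fps_to_fls (fls_regpart c) = c" by simp
  thus "c \<in> range fps_to_fls" by (metis rangeI)
qed

lemma Dom_add: "(a::'k::field fls) \<in> range fps_to_fls \<Longrightarrow> b \<in> range fps_to_fls \<Longrightarrow> a + b \<in> range fps_to_fls"
proof -
  assume "a \<in> range fps_to_fls" "b \<in> range fps_to_fls"
  then obtain a' b' where "a = fps_to_fls a'" "b = fps_to_fls b'" by blast
  hence "a + b = fps_to_fls (a' + b')" by simp
  thus ?thesis by (rule image_eqI) simp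
qed
lemma Dom_mult: "(a::'k::field fls) \<in> range fps_to_fls \<Longrightarrow> b \<in> range fps_to_fls \<Longrightarrow> a * b \<in> range fps_to_fls"
proof -
  assume "a \<in> range fps_to_fls" "b \<in> range fps_to_fls"
  then obtain a' b' where "a = fps_to_fls a'" "b = fps_to_fls b'" by blast
  hence "a * b = fps_to_fls (a' * b')" by (simp add: fls_times_fps_to_fls)
  thus ?thesis by (rule image_eqI) simp
qed
lemma Dom_uminus: "(a::'k::field fls) \<in> range fps_to_fls \<Longrightarrow> - a \<in> range fps_to_fls"
proof -
  assume "a \<in> range fps_to_fls"
  then obtain a' where "a = fps_to_fls a'" by blast
  hence "- a = fps_to_fls (- a')" by simp
  thus ?thesis by (rule image_eqI) simp
qed
lemma Dom_0: "0 \<in> range fps_to_fls" by (metis fps_zero_to_fls rangeI)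
lemma Dom_1: "1 \<in> range fps_to_fls" by (metis fps_one_to_fls rangeI)

lemma Rset_iff: "f \<in> Rset \<longleftrightarrow> c0 f \<in> range fps_to_fls" by (simp add: Rset_def)
lemma Mset_iff: "f \<in> Mset \<longleftrightarrow> c0 f = 0" by (simp add: Mset_def)

lemma Rfr_iff: "x \<in> Rfr \<longleftrightarrow> (\<exists>f. x = to_fract f \<and> c0 f \<in> range fps_to_fls)"
  by (auto simp: Rfr_def Rset_def)
lemma Mfr_iff: "x \<in> Mfr \<longleftrightarrow> (\<exists>f. x = to_fract f \<and> c0 f = 0)"
  by (auto simp: Mfr_def Mset_def)
lemma to_fract_Rfr [simp]: "to_fract f \<in> Rfr \<longleftrightarrow> c0 f \<in> range fps_to_fls"
  by (auto simp: Rfr_iff)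
lemma to_fract_Mfr [simp]: "to_fract f \<in> Mfr \<longleftrightarrow> c0 f = 0"
  by (auto simp: Mfr_iff)
lemma to_fract_Tfr [simp]: "to_fract f \<in> Tfr" by (simp add: Tfr_def)

lemma subr_Tfr: "subr (Tfr :: 'k::field Tring fract set)"
  unfolding subr_def Tfr_def
  by (auto simp flip: to_fract_add to_fract_mult to_fract_uminus to_fract_0 to_fract_1)

lemma subr_Rfr: "subr (Rfr :: 'k::field Tring fract set)"
  unfolding subr_def
proof (intro conjI ballI)
  show "0 \<in> Rfr" using to_fract_Rfr[of 0] Dom_0 by simp
  show "1 \<in> Rfr" using to_fract_Rfr[of 1] Dom_1 by simp
  fix a b :: "'k::field Tring fract" assume "a \<in> Rfr" "b \<in> Rfr"
  then obtain f g where fg: "a = to_fract f" "b = to_fract g" "c0 f \<in> range fps_to_fls" "c0 g \<in> range fps_to_fls"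
    by (auto simp: Rfr_iff)
  show "a + b \<in> Rfr" using fg Dom_add[OF fg(3,4)] by (simp flip: to_fract_add)
  show "a * b \<in> Rfr" using fg Dom_mult[OF fg(3,4)] by (simp flip: to_fract_mult)
  show "- a \<in> Rfr" using fg Dom_uminus[OF fg(3)] by (simp flip: to_fract_uminus)
qed

lemma Rfr_Tfr: "Rfr \<subseteq> Tfr" by (auto simp: Rfr_iff)
lemma Mfr_Rfr: "Mfr \<subseteq> Rfr" by (auto simp: Mfr_iff Dom_0)

lemma Mfr_T: "m \<in> Mfr \<Longrightarrow> t \<in> Tfr \<Longrightarrow> m * t \<in> Mfr"
  by (auto simp: Mfr_iff Tfr_def simp flip: to_fract_mult)

lemma rmod_Mfr: "rmod Rfr Mfr"
  unfolding rmod_def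
proof (intro conjI ballI)
  show "0 \<in> Mfr" using to_fract_Mfr[of 0] by simp
  fix a b :: "'k::field Tring fract" assume "a \<in> Mfr" "b \<in> Mfr"
  then obtain f g where fg: "a = to_fract f" "b = to_fract g" "c0 f = 0" "c0 g = 0"
    by (auto simp: Mfr_iff)
  show "a + b \<in> Mfr" using fg by (simp flip: to_fract_add)
next
  fix r a :: "'k::field Tring fract" assume "r \<in> Rfr" "a \<in> Mfr"
  then obtain f g where fg: "r = to_fract f" "a = to_fract g" "c0 g = 0"
    by (auto simp: Mfr_iff Rfr_iff)
  show "r * a \<in> Mfr" using fg by (simp flip: to_fract_mult)
qed

lemma c0_Y [simp]: "c0 (Yvar :: 'k::field Tring) = 0" by (simp add: Yvar_def)
lemma c0_Z [simp]: "c0 (Zvar :: 'k::field Tring) = 0" by (simp add: Zvar_def)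
lemma Y_nz [simp]: "(Yvar :: 'k::field Tring) \<noteq> 0" 
  by (simp add: Yvar_def)
lemma Z_nz [simp]: "(Zvar :: 'k::field Tring) \<noteq> 0" by (simp add: Zvar_def)

lemma C3:
  fixes x :: "'k::field Tring fract"
  assumes "x * to_fract Yvar \<in> Tfr" "x * to_fract Zvar \<in> Tfr"
  shows "x \<in> Tfr"
proof -
  obtain a b where ab: "x * to_fract Yvar = to_fract a" "x * to_fract Zvar = to_fract b"
    using assms by (auto simp: Tfr_def)
  have "to_fract (a * Zvar) = to_fract (b * Yvar)"
    by (simp flip: ab add: ac_simps)
  hence eq: "a * Zvar = b * Yvar" by (simp only: to_fract_eq_iff)
  define s where "s = Abs_fps (\<lambda>j. b $ (j + 1))"
  have "a = Yvar * s"
  proof (rule fps_ext)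
    fix j
    have "(a * Zvar) $ (j+1) = (b * Yvar) $ (j + 1)" using eq by simp
    hence "a $ j = b $ (j+1) * fps_X" by (simp add: Zvar_def Yvar_def)
    thus "a $ j = (Yvar * s) $ j" by (simp add: Yvar_def s_def mult.commute)
  qed
  hence "x * to_fract Yvar = to_fract s * to_fract Yvar" using ab by (simp add: ac_simps)
  hence "x = to_fract s" by simp
  thus ?thesis by simp
qed

lemma M_decomp:
  fixes f :: "'k::field Tring"
  assumes "c0 f = 0"
  shows "f = Yvar * fps_const (Abs_fps (\<lambda>n. f $ 0 $ (n+1))) + Zvar * Abs_fps (\<lambda>n. f $ (n+1))"
proof -
  define q where "q = Abs_fps (\<lambda>n. f $ 0 $ (n+1))"
  define g where "g = Abs_fps (\<lambda>n. f $ (n+1))"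
  have Yq: "Yvar * fps_const q = fps_const (fps_X * q)" unfolding Yvar_def by (rule fps_const_mult)
  have q: "fps_X * q = f $ 0"
  proof (rule fps_ext)
    fix m show "(fps_X * q) $ m = f $ 0 $ m"
      using assms by (cases m) (simp_all add: q_def)
  qed
  have "f = Yvar * fps_const q + Zvar * g"
  proof (rule fps_ext)
    fix n show "f $ n = (Yvar * fps_const q + Zvar * g) $ n"
      unfolding fps_add_nth Yq q Zvar_def fps_X_mult_nth
      by (cases n) (simp_all add: g_def)
  qed
  thus ?thesis unfolding q_def g_def .
qed

definition Xc :: "int \<Rightarrow> 'k::field Tring" where
  "Xc a = fps_const (fps_const (fls_X_intpow a))"

lemma c0_Xc [simp]: "c0 (Xc a) = fls_X_intpow a" by (simp add: Xc_def)
lemma Xc_mult: "Xc a * Xc b = Xc (a + b)"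
  by (simp add: Xc_def fls_X_intpow_times_fls_X_intpow)
lemma Xc_0: "Xc 0 = 1" by (simp add: Xc_def)

lemma RT_eq_M: "frac_inv Rfr (Tfr :: 'k::field Tring fract set) = Mfr"
proof
  show "Mfr \<subseteq> frac_inv Rfr Tfr" unfolding frac_inv_def using Mfr_T Mfr_Rfr by blast
next
  show "frac_inv Rfr (Tfr :: 'k::field Tring fract set) \<subseteq> Mfr"
  proof
    fix x :: "'k::field Tring fract" assume x: "x \<in> frac_inv Rfr Tfr"
    hence "x * 1 \<in> Rfr" unfolding frac_inv_def using subr_Tfr by (auto simp: subr_def)
    then obtain f where f: "x = to_fract f" using Rfr_Tfr by (auto simp: Tfr_def)
    have "c0 f = 0"
    proof (rule ccontr)
      assume nz: "c0 f \<noteq> 0"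
      define n where "n = fls_subdegree (c0 f) + 1"
      have "x * to_fract (Xc (- n)) \<in> Rfr" using x unfolding frac_inv_def by simp
      hence "c0 (f * Xc (-n)) \<in> range fps_to_fls" unfolding f by (simp flip: to_fract_mult)
      hence "0 \<le> fls_subdegree (c0 f * fls_X_intpow (-n))" by (simp add: Dom_iff)
      also have "fls_subdegree (c0 f * fls_X_intpow (-n)) = fls_subdegree (c0 f) - n"
        using fls_subdegree_mult_fls_X_intpow(2)[OF nz, of "-n"] by simp
      finally show False unfolding n_def by simp
    qed
    thus "x \<in> Mfr" using f by simp
  qed
qed

lemma T_unit:
  fixes u :: "'k::field Tring"
  assumes "c0 u \<noteq> 0"
  obtains v where "u * v = 1" "c0 v = inverse (c0 u)"
proof -
  define y1 where "y1 = fps_right_inverse (u $ 0) (inverse (c0 u))"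
  have "u $ 0 $ 0 * inverse (c0 u) = 1" using assms by simp
  hence y1: "u $ 0 * y1 = 1" unfolding y1_def by (rule fps_right_inverse)
  have "u * fps_right_inverse u y1 = 1" using y1 by (rule fps_right_inverse)
  moreover have "c0 (fps_right_inverse u y1) = inverse (c0 u)"
    by (simp add: y1_def fps_lr_inverse_nth_0)
  ultimately show ?thesis using that by blast
qed

lemma Xc_Rfr: "0 \<le> a \<Longrightarrow> to_fract (Xc a) \<in> Rfr"
  by (simp add: Dom_iff)

lemma in_XR:
  fixes u :: "'k::field Tring"
  assumes "c0 u = 0 \<or> a \<le> fls_subdegree (c0 u)"
  shows "to_fract u \<in> (*) (to_fract (Xc a)) ` Rfr"
proof -
  have "u = Xc a * (Xc (-a) * u)" by (simp add: mult.assoc[symmetric] Xc_mult Xc_0)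
  moreover have "to_fract (Xc (-a) * u) \<in> Rfr"
  proof (cases "c0 u = 0")
    case True thus ?thesis unfolding to_fract_Rfr by (simp add: Dom_0)
  next
    case False
    hence "a \<le> fls_subdegree (c0 u)" using assms by simp
    moreover have "fls_subdegree (fls_X_intpow (-a) * c0 u) = fls_subdegree (c0 u) - a"
      using fls_subdegree_mult_fls_X_intpow(1)[OF False, of "-a"] by simp
    ultimately show ?thesis unfolding to_fract_Rfr by (simp add: Dom_iff)
  qed
  ultimately show ?thesis by (metis image_eqI to_fract_mult)
qed

lemma ideal_gen_mono:
  assumes "finite S'" "S \<subseteq> S'"
  shows "ideal_gen Rfr S \<subseteq> ideal_gen (Rfr :: 'k::field Tring fract set) S'"
  using assms subr_Rfr ideal_gen_incl ideal_gen_rmod by (metis ideal_gen_min order_trans)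

lemma L1_ind:
  fixes S :: "'k::field Tring fract set"
  assumes "finite S"
  shows "S \<subseteq> Tfr \<Longrightarrow> \<exists>a \<le> 0. S \<subseteq> (*) (to_fract (Xc a)) ` Rfr \<and> (a = 0 \<or> to_fract (Xc a) \<in> ideal_gen Rfr S)"
  using assms
proof (induction S rule: finite_induct)
  case empty thus ?case by (intro exI[of _ 0]) simp
next
  case (insert s S)
  then obtain a where a: "a \<le> 0" "S \<subseteq> (*) (to_fract (Xc a)) ` Rfr"
      "a = 0 \<or> to_fract (Xc a) \<in> ideal_gen Rfr S" by auto
  obtain u where u: "s = to_fract u" using insert.prems by (auto simp: Tfr_def)
  have mono: "ideal_gen Rfr S \<subseteq> ideal_gen Rfr (insert s S)"
    by (rule ideal_gen_mono) (use insert in auto)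
  have sI: "s \<in> ideal_gen Rfr (insert s S)"
    using ideal_gen_incl[OF subr_Rfr, of "insert s S"] insert by auto
  show ?case
  proof (cases "c0 u = 0 \<or> a \<le> fls_subdegree (c0 u)")
    case True
    show ?thesis using a mono in_XR[OF True] u by (intro exI[of _ a]) auto
  next
    case False
    define b where "b = fls_subdegree (c0 u)"
    have nz: "c0 u \<noteq> 0" and ba: "b < a" using False by (auto simp: b_def)
    have S_sub: "S \<subseteq> (*) (to_fract (Xc b)) ` Rfr"
    proof
      fix t assume "t \<in> S"
      then obtain r where r: "r \<in> Rfr" "t = to_fract (Xc a) * r" using a(2) by blast
      have "to_fract (Xc (a - b)) \<in> Rfr" by (rule Xc_Rfr) (use ba in simp)
      hence "to_fract (Xc (a - b)) * r \<in> Rfr" using subr_Rfr r(1) unfolding subr_def by blast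
      moreover have "t = to_fract (Xc b) * (to_fract (Xc (a - b)) * r)"
        using r by (simp add: mult.assoc[symmetric] Xc_mult flip: to_fract_mult)
      ultimately show "t \<in> (*) (to_fract (Xc b)) ` Rfr" by blast
    qed
    have s_in: "s \<in> (*) (to_fract (Xc b)) ` Rfr" using in_XR[of u b] u by (simp add: b_def)
    define w where "w = Xc (-b) * u"
    have uw: "u = Xc b * w" by (simp add: w_def mult.assoc[symmetric] Xc_mult Xc_0)
    have cw: "c0 w = fls_X_intpow (-b) * c0 u" by (simp add: w_def)
    have cwnz: "c0 w \<noteq> 0" using nz cw by (simp add: fls_shift_eq0_iff)
    have sdw: "fls_subdegree (c0 w) = 0"
      using fls_subdegree_mult_fls_X_intpow(1)[OF nz, of "-b"] cw by (simp add: b_def)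
    obtain v where v: "w * v = 1" "c0 v = inverse (c0 w)" using T_unit[OF cwnz] by blast
    have vR: "to_fract v \<in> Rfr" using v(2) sdw by (simp add: Dom_iff)
    have vw: "v * (Xc b * w) = Xc b" using v(1) by (metis mult.commute mult.left_commute mult.right_neutral)
    have "to_fract v * s = to_fract (v * (Xc b * w))" unfolding u uw by (simp only: to_fract_mult)
    hence "to_fract v * s = to_fract (Xc b)" unfolding vw .
    moreover have "to_fract v * s \<in> ideal_gen Rfr (insert s S)"
      using ideal_gen_rmod[OF subr_Rfr, of "insert s S"] vR sI unfolding rmod_def by blast
    ultimately show ?thesis using S_sub s_in ba a(1)
      by (intro exI[of _ b]) auto
  qed
qed

lemma L1:
  fixes S :: "'k::field Tring fract set"
  assumes "finite S" "S \<subseteq> Tfr" "1 \<in> ideal_gen Rfr S"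
  shows "\<exists>c. ideal_gen Rfr S = (*) c ` Rfr"
proof -
  obtain a where a: "S \<subseteq> (*) (to_fract (Xc a)) ` Rfr" "a = 0 \<or> to_fract (Xc a) \<in> ideal_gen Rfr S"
    using L1_ind[OF assms(1,2)] by blast
  define q :: "'k Tring fract" where "q = to_fract (Xc a)"
  have qI: "q \<in> ideal_gen Rfr S" using a(2) assms(3) by (auto simp: q_def Xc_0)
  have "ideal_gen Rfr S \<subseteq> (*) q ` Rfr"
    using a(1) unfolding q_def by (intro ideal_gen_min rmod_scale subr_rmod subr_Rfr)
  moreover have "(*) q ` Rfr \<subseteq> ideal_gen Rfr S"
    using ideal_gen_rmod[OF subr_Rfr, of S] qI by (auto simp: rmod_def mult.commute)
  ultimately show ?thesis by blast
qed

lemma L2: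
  fixes S :: "'k::field Tring fract set"
  assumes I: "I = ideal_gen Rfr S" "finite S" "S \<subseteq> Rfr" and np: "\<not> (\<exists>c. I = (*) c ` Rfr)"
  shows "frac_inv Tfr I \<subseteq> frac_inv Rfr I"
proof
  fix x assume x: "x \<in> frac_inv Tfr I"
  show "x \<in> frac_inv Rfr I" unfolding frac_inv_def
  proof (intro CollectI ballI)
    fix i assume i: "i \<in> I"
    have "x * i \<in> Tfr" using x i unfolding frac_inv_def by blast
    then obtain u where u: "x * i = to_fract u" by (auto simp: Tfr_def)
    show "x * i \<in> Rfr"
    proof (cases "c0 u = 0")
      case True thus ?thesis using u Dom_0 by simp
    next
      case False
      obtain v where v: "u * v = 1" "c0 v = inverse (c0 u)" using T_unit[OF False] by blast
      define e where "e = x * to_fract v"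
      have "e * i = (x * i) * to_fract v" unfolding e_def by (simp add: ac_simps)
      also have "\<dots> = to_fract (u * v)" unfolding u by simp
      finally have ei: "e * i = 1" using v(1) by simp
      have enz: "e \<noteq> 0" using ei by auto
      have SI: "S \<subseteq> I" using ideal_gen_incl[OF subr_Rfr I(2)] I(1) by simp
      have ST: "(*) e ` S \<subseteq> Tfr"
      proof
        fix t assume "t \<in> (*) e ` S"
        then obtain s where s: "s \<in> S" "t = e * s" by blast
        have "x * s \<in> Tfr" using x SI s unfolding frac_inv_def by blast
        moreover have "to_fract v \<in> Tfr" by simp
        ultimately have "(x * s) * to_fract v \<in> Tfr" using subr_Tfr by (auto simp: subr_def)
        thus "t \<in> Tfr" using s by (simp add: e_def ac_simps)
      qed
      have eI: "(*) e ` I = ideal_gen Rfr ((*) e ` S)"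
        unfolding I(1) by (rule ideal_gen_scale[OF subr_Rfr I(2) enz])
      have "1 \<in> ideal_gen Rfr ((*) e ` S)" using ei i eI by (metis image_eqI)
      then obtain c where c: "ideal_gen Rfr ((*) e ` S) = (*) c ` Rfr"
        using L1[OF _ ST] I(2) by blast
      have "I = (*) (inverse e) ` ((*) e ` I)" using enz by (simp add: image_image mult.assoc[symmetric])
      also have "\<dots> = (*) (inverse e * c) ` Rfr" unfolding eI c by (simp add: image_image mult.assoc)
      finally have False using np by blast
      thus ?thesis ..
    qed
  qed
qed

lemma sd_nonneg:
  fixes e c :: "'a::field fls"
  assumes "e \<noteq> 0" "c \<noteq> 0" "\<And>k. 0 \<le> fls_subdegree (e * c ^ k)"
  shows "0 \<le> fls_subdegree c"
proof (rule ccontr)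
  assume neg: "\<not> 0 \<le> fls_subdegree c"
  define k where "k = nat \<bar>fls_subdegree e\<bar> + 1"
  have "fls_subdegree (e * c ^ k) = fls_subdegree e + int k * fls_subdegree c"
    using assms(1,2) by (simp add: fls_subdegree_pow)
  also have "int k * fls_subdegree c \<le> int k * (-1)"
    by (rule mult_left_mono) (use neg in simp_all)
  also have "fls_subdegree e + int k * (-1) < 0" unfolding k_def by simp
  finally show False using assms(3)[of k] by simp
qed

definition cmap :: "'k::field Tring \<Rightarrow> 'k fls fls fps" where
  "cmap f = Abs_fps (\<lambda>n. fps_to_fls (f $ n))"

lemma cmap_nth [simp]: "cmap f $ n = fps_to_fls (f $ n)" by (simp add: cmap_def)

lemma fps_to_fls_sum: "fps_to_fls (sum h A) = (\<Sum>i\<in>A. fps_to_fls (h i))"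
  by (induction A rule: infinite_finite_induct) simp_all

lemma cmap_add [simp]: "cmap (f + g) = cmap f + cmap g" by (rule fps_ext) simp
lemma cmap_uminus [simp]: "cmap (- f) = - cmap f" by (rule fps_ext) simp
lemma cmap_diff [simp]: "cmap (f - g) = cmap f - cmap g" by (rule fps_ext) simp
lemma cmap_0 [simp]: "cmap 0 = 0" by (rule fps_ext) simp
lemma cmap_1 [simp]: "cmap 1 = 1" by (rule fps_ext) simp
lemma cmap_mult [simp]: "cmap (f * g) = cmap f * cmap g"
  by (rule fps_ext) (simp add: fps_mult_nth fps_to_fls_sum fls_times_fps_to_fls)
lemma cmap_power [simp]: "cmap (f ^ n) = cmap f ^ n" by (induction n) simp_all
lemma cmap_of_nat [simp]: "cmap (of_nat n) = of_nat n" by (induction n) simp_all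
lemma cmap_eq_iff [simp]: "cmap f = cmap g \<longleftrightarrow> f = g"
proof
  assume "cmap f = cmap g"
  hence "\<And>n. fps_to_fls (f $ n) = fps_to_fls (g $ n)" by (metis cmap_nth)
  thus "f = g" by (intro fps_ext) simp
qed simp

lemma range_cmap_iff: "y \<in> range cmap \<longleftrightarrow> (\<forall>n. y $ n \<in> range fps_to_fls)"
proof
  assume "y \<in> range cmap" thus "\<forall>n. y $ n \<in> range fps_to_fls" by auto
next
  assume a: "\<forall>n. y $ n \<in> range fps_to_fls"
  have "cmap (Abs_fps (\<lambda>n. fls_regpart (y $ n))) = y"
  proof (rule fps_ext)
    fix n have "0 \<le> fls_subdegree (y $ n)" using a Dom_iff by blast
    thus "cmap (Abs_fps (\<lambda>n. fls_regpart (y $ n))) $ n = y $ n" by simp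
  qed
  thus "y \<in> range cmap" by (metis rangeI)
qed

lemma rc_add: "(a::'k::field fls fls fps) \<in> range cmap \<Longrightarrow> b \<in> range cmap \<Longrightarrow> a + b \<in> range cmap"
proof -
  assume "a \<in> range cmap" "b \<in> range cmap"
  then obtain a' b' where "a = cmap a'" "b = cmap b'" by blast
  hence "a + b = cmap (a' + b')" by simp
  thus ?thesis by (rule image_eqI) simp
qed
lemma rc_mult: "(a::'k::field fls fls fps) \<in> range cmap \<Longrightarrow> b \<in> range cmap \<Longrightarrow> a * b \<in> range cmap"
proof -
  assume "a \<in> range cmap" "b \<in> range cmap"
  then obtain a' b' where "a = cmap a'" "b = cmap b'" by blast
  hence "a * b = cmap (a' * b')" by simp
  thus ?thesis by (rule image_eqI) simp
qed
lemma rc_uminus: "(a::'k::field fls fls fps) \<in> range cmap \<Longrightarrow> - a \<in> range cmap"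
proof -
  assume "a \<in> range cmap"
  then obtain a' where "a = cmap a'" by blast
  hence "- a = cmap (- a')" by simp
  thus ?thesis by (rule image_eqI) simp
qed
lemma rc_power: "(a::'k::field fls fls fps) \<in> range cmap \<Longrightarrow> a ^ n \<in> range cmap"
proof -
  assume "a \<in> range cmap"
  then obtain a' where "a = cmap a'" by blast
  hence "a ^ n = cmap (a' ^ n)" by simp
  thus ?thesis by (rule image_eqI) simp
qed
lemma rc_of_nat: "(of_nat n::'k::field fls fls fps) \<in> range cmap"
  by (metis cmap_of_nat rangeI)
lemma rc_sum: "(\<And>i. i \<in> A \<Longrightarrow> (h i::'k::field fls fls fps) \<in> range cmap) \<Longrightarrow> sum h A \<in> range cmap"
proof (induction A rule: infinite_finite_induct)
  case (infinite A) thus ?case by (metis cmap_0 rangeI sum.infinite)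
next
  case empty thus ?case by (metis cmap_0 rangeI sum.empty)
next
  case (insert x F) thus ?case by (simp add: rc_add)
qed

lemma coeff_extract:
  fixes D y :: "'a::comm_ring_1 fps"
  assumes D: "D \<noteq> 0" and y: "\<And>i. i < m \<Longrightarrow> y $ i = 0"
  shows "(D * y ^ k) $ (subdegree D + k * m) = D $ subdegree D * (y $ m) ^ k"
proof -
  define r where "r = subdegree D"
  define y1 where "y1 = fps_shift m y"
  define D1 where "D1 = fps_shift r D"
  have ye: "y = fps_X ^ m * y1"
  proof (cases "y = 0")
    case True thus ?thesis by (simp add: y1_def)
  next
    case False
    hence "subdegree y \<ge> m" using y by (intro subdegree_geI) auto
    thus ?thesis unfolding y1_def by (intro fps_conv_fps_X_power_mult_fps_shift) simp
  qed
  have De: "D = fps_X ^ r * D1" unfolding D1_def r_def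
    by (intro fps_conv_fps_X_power_mult_fps_shift) simp
  have "D * y ^ k = fps_X ^ (r + k * m) * (D1 * y1 ^ k)"
    unfolding ye De by (simp add: power_mult_distrib power_add ac_simps flip: power_mult)
  hence "(D * y ^ k) $ (r + k * m) = (D1 * y1 ^ k) $ 0"
    by (simp add: fps_X_power_mult_nth)
  also have "\<dots> = D $ r * (y $ m) ^ k"
    by (simp add: D1_def y1_def fps_power_zeroth)
  finally show ?thesis unfolding r_def .
qed

lemma coeffs_in:
  fixes D x :: "'k::field fls fls fps"
  assumes D: "D \<noteq> 0" and Dx: "\<And>k. D * x ^ k \<in> range cmap"
  shows "x $ m \<in> range fps_to_fls"
proof (induction m rule: less_induct)
  case (less m)
  define p where "p = Abs_fps (\<lambda>i. if i < m then x $ i else 0)"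
  have p: "p \<in> range cmap" unfolding range_cmap_iff p_def using less Dom_0 by auto
  define y where "y = x - p"
  have y0: "\<And>i. i < m \<Longrightarrow> y $ i = 0" by (simp add: y_def p_def)
  have ym: "y $ m = x $ m" by (simp add: y_def p_def)
  have Dy: "D * y ^ k \<in> range cmap" for k
  proof -
    have "y ^ k = (\<Sum>j\<le>k. of_nat (k choose j) * x ^ j * (- p) ^ (k - j))"
      unfolding y_def diff_conv_add_uminus by (rule binomial_ring)
    hence "D * y ^ k = (\<Sum>j\<le>k. of_nat (k choose j) * (D * x ^ j) * (- p) ^ (k - j))"
      by (simp add: sum_distrib_left ac_simps)
    also have "\<dots> \<in> range cmap"
      by (intro rc_sum rc_mult rc_of_nat Dx rc_power rc_uminus p)
    finally show ?thesis .
  qed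
  define r where "r = subdegree D"
  have e: "D $ r \<noteq> 0" unfolding r_def using D by simp
  have coef: "D $ r * (x $ m) ^ k \<in> range fps_to_fls" for k
  proof -
    have "(D * y ^ k) $ (subdegree D + k * m) \<in> range fps_to_fls" using Dy[of k] unfolding range_cmap_iff by blast
    thus ?thesis using coeff_extract[of D m y k, OF D y0] ym unfolding r_def by simp
  qed
  show ?case
  proof (cases "x $ m = 0")
    case True thus ?thesis using Dom_0 by simp
  next
    case False
    have "0 \<le> fls_subdegree (x $ m)"
      by (rule sd_nonneg[OF e False]) (use coef Dom_iff in blast)
    thus ?thesis using Dom_iff by blast
  qed
qed

definition phi :: "'k::field Tring \<Rightarrow> 'k fls fls fls" where
  "phi f = fps_to_fls (cmap f)"

lemma phi_mult [simp]: "phi (f * g) = phi f * phi g" by (simp add: phi_def fls_times_fps_to_fls)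
lemma phi_power [simp]: "phi (f ^ n) = phi f ^ n" by (simp add: phi_def fps_to_fls_power)
lemma phi_eq_iff [simp]: "phi f = phi g \<longleftrightarrow> f = g" by (simp add: phi_def)
lemma phi_eq_0 [simp]: "phi f = 0 \<longleftrightarrow> f = 0" using cmap_eq_iff[of f 0] by (simp add: phi_def)

lemma to_fract_power: "to_fract (f ^ n) = to_fract f ^ n" by (induction n) simp_all

lemma CIC:
  fixes d w :: "'k::field Tring fract"
  assumes d: "d \<in> Tfr" "d \<noteq> 0" and dw: "\<forall>k. d * w ^ k \<in> Tfr"
  shows "w \<in> Tfr"
proof -
  obtain f g where fg: "w = to_fract f / to_fract g" "g \<noteq> 0"
    by (cases w) (auto simp: Fract_conv_to_fract)
  obtain d0 where d0: "d = to_fract d0" "d0 \<noteq> 0" using d by (auto simp: Tfr_def)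
  have hk: "\<exists>h. d0 * f ^ k = h * g ^ k" for k
  proof -
    obtain h where h: "d * w ^ k = to_fract h" using dw by (auto simp: Tfr_def)
    have "to_fract (d0 * f ^ k) = to_fract (h * g ^ k)"
      using h fg d0 by (simp add: power_divide field_simps to_fract_power)
    thus ?thesis by (simp only: to_fract_eq_iff) blast
  qed
  show ?thesis
  proof (cases "f = 0")
    case True thus ?thesis using fg to_fract_Tfr[of 0] by simp
  next
    case fnz: False
    define x where "x = phi f / phi g"
    have gnz: "phi g \<noteq> 0" using fg by simp
    have xnz: "x \<noteq> 0" using fnz gnz by (simp add: x_def)
    have xk: "phi d0 * x ^ k = phi h" if "d0 * f ^ k = h * g ^ k" for k h
    proof -
      have "phi d0 * phi f ^ k = phi h * phi g ^ k" using arg_cong[OF that, of phi] by simp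
      thus ?thesis unfolding x_def using gnz by (simp add: power_divide field_simps)
    qed
    have sdx: "0 \<le> fls_subdegree x"
    proof (rule sd_nonneg[of "phi d0"])
      show "phi d0 \<noteq> 0" using d0 by simp
      show "x \<noteq> 0" by (rule xnz)
      fix k obtain h where "d0 * f ^ k = h * g ^ k" using hk by blast
      hence "phi d0 * x ^ k = fps_to_fls (cmap h)" using xk unfolding phi_def by simp
      thus "0 \<le> fls_subdegree (phi d0 * x ^ k)" by (simp add: fls_subdegree_fls_to_fps_gt0)
    qed
    define x' where "x' = fls_regpart x"
    have xx': "x = fps_to_fls x'" unfolding x'_def using sdx by simp
    have Dx: "cmap d0 * x' ^ k \<in> range cmap" for k
    proof -
      obtain h where "d0 * f ^ k = h * g ^ k" using hk by blast
      hence "fps_to_fls (cmap d0 * x' ^ k) = fps_to_fls (cmap h)"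
        using xk unfolding phi_def xx' by (simp add: fls_times_fps_to_fls fps_to_fls_power)
      hence "cmap d0 * x' ^ k = cmap h" by simp
      thus ?thesis by simp
    qed
    have "\<forall>m. x' $ m \<in> range fps_to_fls"
      using coeffs_in[of "cmap d0" x'] Dx d0 by (metis cmap_0 cmap_eq_iff)
    hence "x' \<in> range cmap" using range_cmap_iff by blast
    then obtain t where t: "cmap t = x'" by blast
    have "phi (g * t) = phi f" using gnz unfolding phi_mult by (simp add: phi_def t xx'[symmetric] x_def)
    hence "g * t = f" by (simp only: phi_eq_iff)
    hence "to_fract f = to_fract g * to_fract t" by (metis to_fract_mult)
    hence "w = to_fract t" using fg by simp
    thus ?thesis by simp
  qed
qed

lemma fp_two:
  assumes "a \<in> A" "b \<in> B" "c \<in> A" "e \<in> B"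
  shows "a * b + c * e \<in> fideal_prod A B"
  unfolding fideal_prod_def
proof (intro CollectI exI conjI)
  show "\<forall>k<2::nat. (if k = 0 then a else c) \<in> A \<and> (if k = 0 then b else e) \<in> B" using assms by auto
  show "a * b + c * e = (\<Sum>k<2::nat. (if k = 0 then a else c) * (if k = 0 then b else e))"
    by (simp add: numeral_2_eq_2)
qed

lemma YZ_props:
  defines "YZ \<equiv> ideal_gen Rfr {to_fract (Yvar :: 'k::field Tring), to_fract Zvar}"
  shows "YZ \<subseteq> Mfr" "to_fract Yvar \<in> YZ" "to_fract Zvar \<in> YZ" "rmod Rfr YZ"
proof -
  show "YZ \<subseteq> Mfr" unfolding YZ_def by (rule ideal_gen_min[OF rmod_Mfr]) simp
  show "to_fract Yvar \<in> YZ" "to_fract Zvar \<in> YZ"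
    using ideal_gen_incl[OF subr_Rfr, of "{to_fract (Yvar :: 'k::field Tring), to_fract Zvar}"]
    unfolding YZ_def by auto
  show "rmod Rfr YZ" unfolding YZ_def by (rule ideal_gen_rmod[OF subr_Rfr])
qed

lemma inv_of_YZset:
  fixes A :: "'k::field Tring fract set"
  assumes "A \<subseteq> Mfr" "to_fract Yvar \<in> A" "to_fract Zvar \<in> A"
  shows "frac_inv Rfr A = Tfr"
proof
  show "Tfr \<subseteq> frac_inv Rfr A" unfolding frac_inv_def
  proof (intro subsetI CollectI ballI)
    fix x i :: "'k Tring fract" assume "x \<in> Tfr" "i \<in> A"
    hence "i * x \<in> Mfr" using assms(1) Mfr_T by blast
    thus "x * i \<in> Rfr" using Mfr_Rfr by (auto simp: mult.commute)
  qed
next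
  show "frac_inv Rfr A \<subseteq> Tfr"
  proof
    fix x assume "x \<in> frac_inv Rfr A"
    hence "x * to_fract Yvar \<in> Rfr" "x * to_fract Zvar \<in> Rfr" using assms unfolding frac_inv_def by auto
    thus "x \<in> Tfr" using C3 Rfr_Tfr by blast
  qed
qed

lemma prod_YZ_T:
  defines "YZ \<equiv> ideal_gen Rfr {to_fract (Yvar :: 'k::field Tring), to_fract Zvar}"
  shows "fideal_prod YZ Tfr = Mfr"
proof
  show "fideal_prod YZ Tfr \<subseteq> Mfr"
  proof (rule fp_sub)
    show "(0::'k Tring fract) \<in> Mfr" using to_fract_Mfr[of "0::'k Tring"] by simp
    show "a + b \<in> Mfr" if "a \<in> Mfr" "b \<in> Mfr" for a b :: "'k Tring fract"
      using rmod_Mfr that unfolding rmod_def by blast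
    show "f * g \<in> Mfr" if "f \<in> YZ" "g \<in> Tfr" for f g :: "'k Tring fract"
      using YZ_props(1) that Mfr_T unfolding YZ_def by blast
  qed
next
  show "Mfr \<subseteq> fideal_prod YZ Tfr"
  proof
    fix m :: "'k Tring fract" assume "m \<in> Mfr"
    then obtain f where f: "m = to_fract f" "c0 f = 0" by (auto simp: Mfr_iff)
    have "m = to_fract Yvar * to_fract (fps_const (Abs_fps (\<lambda>n. f $ 0 $ (n+1))))
             + to_fract Zvar * to_fract (Abs_fps (\<lambda>n. f $ (n+1)))"
      unfolding f(1) by (subst M_decomp[OF f(2)]) simp
    thus "m \<in> fideal_prod YZ Tfr" using YZ_props(2,3) unfolding YZ_def
      by (simp only:) (intro fp_two to_fract_Tfr)
  qed
qed

theorem mainTheorem12: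
  fixes k_type :: "'k::field itself"
  defines "R \<equiv> (Rfr :: 'k Tring fract set)"
  defines "YZ \<equiv> ideal_gen R {to_fract (Yvar :: 'k Tring), to_fract Zvar}"
  shows "(\<forall>I. is_ideal R I \<and> fin_gen_ideal R I \<and> I \<noteq> {0} \<longrightarrow> v_basic R I)
         \<and> \<not> v_domain R
         \<and> v_closure R (fideal_prod YZ (frac_inv R YZ)) = Mfr
         \<and> (Mfr :: 'k Tring fract set) \<noteq> R"
proof -
  have p3: "v_closure R (fideal_prod YZ (frac_inv R YZ)) = Mfr"
  proof -
    have "frac_inv R YZ = Tfr" unfolding R_def YZ_def
      by (rule inv_of_YZset) (use YZ_props in auto)
    hence "fideal_prod YZ (frac_inv R YZ) = Mfr" unfolding YZ_def R_def using prod_YZ_T by simp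
    moreover have "frac_inv R (Mfr :: 'k Tring fract set) = Tfr" unfolding R_def
      by (rule inv_of_YZset) auto
    ultimately show ?thesis unfolding v_closure_def using RT_eq_M unfolding R_def by simp
  qed
  have p4: "(Mfr :: 'k Tring fract set) \<noteq> R"
  proof
    assume "(Mfr :: 'k Tring fract set) = R"
    moreover have "to_fract (1::'k Tring) \<in> Rfr" using Dom_1 by (simp only: to_fract_Rfr) simp
    moreover have "to_fract (1::'k Tring) \<notin> Mfr" by (simp only: to_fract_Mfr) simp
    ultimately show False unfolding R_def by simp
  qed
  have p2: "\<not> v_domain R"
  proof
    assume vd: "v_domain R"
    have "is_ideal R YZ" unfolding is_ideal_rmod R_def YZ_def
      using YZ_props Mfr_Rfr by blast
    moreover have "fin_gen_ideal R YZ" unfolding fin_gen_ideal_def YZ_def R_def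
      by (intro exI[of _ "{to_fract (Yvar :: 'k Tring), to_fract Zvar}"]) (simp add: Dom_0)
    moreover have "YZ \<noteq> {0}"
    proof
      assume "YZ = {0}"
      hence "to_fract (Yvar :: 'k Tring) = 0" using YZ_props(2) unfolding YZ_def R_def by blast
      thus False by (simp only: to_fract_eq_0_iff) simp
    qed
    ultimately have "v_closure R (fideal_prod YZ (frac_inv R YZ)) = R" using vd unfolding v_domain_def by blast
    thus False using p3 p4 by simp
  qed
  have p1: "v_basic R I" if I: "is_ideal R I" "fin_gen_ideal R I" "I \<noteq> {0}" for I
    unfolding v_basic_def
  proof (intro allI impI)
    fix J assume J: "v_reduction R J I"
    show "v_closure R J = v_closure R I"
    proof (cases "\<exists>c. I = (*) c ` R")
      case True
      then obtain c where c: "I = (*) c ` R" by blast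
      have "c \<noteq> 0"
      proof
        assume "c = 0"
        moreover have "R \<noteq> {}" using subr_Rfr unfolding R_def subr_def by blast
        ultimately have "I = {0}" using c by auto
        thus False using I(3) by simp
      qed
      thus ?thesis using principal_vbasic[OF _ c _ J] subr_Rfr unfolding R_def by blast
    next
      case False
      obtain S where S: "finite S" "S \<subseteq> R" "I = ideal_gen R S"
        using I(2) unfolding fin_gen_ideal_def by blast
      have L: "frac_inv Tfr I \<subseteq> frac_inv R I" using L2[of I S] S False unfolding R_def by blast
      show ?thesis unfolding R_def
      proof (rule nonprincipal_vbasic[of Rfr Tfr "to_fract Yvar" "to_fract Zvar"])
        show "subr Rfr" by (rule subr_Rfr)
        show "subr Tfr" by (rule subr_Tfr)
        show "Rfr \<subseteq> Tfr" by (rule Rfr_Tfr)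
        show "to_fract Yvar * t \<in> Rfr" if "t \<in> Tfr" for t
          using Mfr_T[OF _ that, of "to_fract Yvar"] Mfr_Rfr by auto
        show "to_fract Zvar * t \<in> Rfr" if "t \<in> Tfr" for t
          using Mfr_T[OF _ that, of "to_fract Zvar"] Mfr_Rfr by auto
        show "x \<in> Tfr" if "x * to_fract Yvar \<in> Tfr" "x * to_fract Zvar \<in> Tfr" for x
          using C3 that by blast
        show "w \<in> Tfr" if "d \<in> Tfr" "d \<noteq> 0" "\<forall>k. d * w ^ k \<in> Tfr" for d w
          using CIC that by blast
        show "is_ideal Rfr I" using I(1) unfolding R_def .
        show "I \<noteq> {0}" by (rule I(3))
        show "frac_inv Tfr I \<subseteq> frac_inv Rfr I" using L unfolding R_def .
        show "v_reduction Rfr J I" using J unfolding R_def .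
      qed
    qed
  qed
  show ?thesis using p1 p2 p3 p4 by blast
qed

end
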